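(* Let $d\geq 1$, $n\geq 1$ and $1\leq a\leq d+1$ be integers. Then $$\sum_{\pi\in \mathcal F_d^{(a)}(n)}\lambda(\pi)-\sum_{\pi\in \mathcal H_d^{(a)}(n)}\lambda(\pi)=\sum_{m=1}^{n-1} f_d^{(a)}(n-m)\,f_d^{(1)}(m)-\sum_{m=1}^{n-1} f_d^{(a)}(n-m)\,f_d^{(d+1)}(m).$$ Equivalently, $\sum_{n\geq1}\Big(\sum_{\pi\in \mathcal F_d^{(a)}(n)}\lambda(\pi)-\sum_{\pi\in \mathcal H_d^{(a)}(n)}\lambda(\pi)\Big)q^n=\dfrac{q^{a+1}-q^{a+1+d}}{(1-q-q^{d+1})^2}$.
   Context: A partition is a finite nonincreasing sequence of positive integers (its parts); its size is not fixed. For a partition $\pi$, $\lambda(\pi)$ is its number of parts, $\alpha(\pi)$ its largest part, and its perimeter is $\alpha(\pi)+\lambda(\pi)-1$. A partition has $d$-distinct parts if any two of its parts differ by at least $d$. For $1\le b\le d+1$, $\mathcal F_d^{(b)}(n)$ is the set of partitions of perimeter $n$ all of whose parts are $\equiv b \pmod{d+1}$, and $f_d^{(b)}(n)=|\mathcal F_d^{(b)}(n)|$. $\mathcal H_d^{(a)}(n)$ is the set of partitions of perimeter $n$ whose parts are $d$-distinct and all $\geq a$. (The paper writes the right-hand side as $fp^{(a,1)}(n)-fp^{(a,d+1)}(n)$ where $fp^{(a,b)}(n)$ counts ordered pairs $(\pi_1,\pi_2)$ with $\pi_1\in\mathcal F_d^{(a)}(n-m)$, $\pi_2\in\mathcal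 F_d^{(b)}(m)$ for some $1\le m\le n-1$.) *)

theory Defs
  imports Main
begin

definition is_partition :: "nat list \<Rightarrow> bool" where
  "is_partition xs \<longleftrightarrow> sorted_wrt (\<ge>) xs \<and> (\<forall>x\<in>set xs. 0 < x)"

definition num_parts :: "nat list \<Rightarrow> nat" where
  "num_parts xs = length xs"

definition largest_part :: "nat list \<Rightarrow> nat" where
  "largest_part xs = Max (insert 0 (set xs))"

definition perimeter :: "nat list \<Rightarrow> nat" where
  "perimeter xs = largest_part xs + num_parts xs - 1"

definition d_distinct :: "nat \<Rightarrow> nat list \<Rightarrow> bool" where
  "d_distinct d xs \<longleftrightarrow> (\<forall>i j. i < j \<and> j < length xs \<longrightarrow>
       (xs ! i \<ge> xs ! j + d \<or> xs ! j \<ge> xs ! i + d))"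

definition F_set :: "nat \<Rightarrow> nat \<Rightarrow> nat \<Rightarrow> nat list set" where
  "F_set d b n = {xs. is_partition xs \<and> perimeter xs = n \<and>
      (\<forall>x\<in>set xs. x mod (d + 1) = b mod (d + 1))}"

definition f_count :: "nat \<Rightarrow> nat \<Rightarrow> nat \<Rightarrow> nat" where
  "f_count d b n = card (F_set d b n)"

definition H_set :: "nat \<Rightarrow> nat \<Rightarrow> nat \<Rightarrow> nat list set" where
  "H_set d a n = {xs. is_partition xs \<and> perimeter xs = n \<and> d_distinct d xs \<and>
      (\<forall>x\<in>set xs. a \<le> x)}"

end

theory Submission imports Defs begin

definition Fc :: "nat \<Rightarrow> nat \<Rightarrow> nat \<Rightarrow> nat list set" where
  "Fc d b n = {xs. xs \<noteq> [] \<and> sorted_wrt (\<ge>) xs \<and> hd xs + length xs = Suc n \<and>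
     (\<forall>x\<in>set xs. 0 < x \<and> x mod (d+1) = b mod (d+1))}"

definition Hc :: "nat \<Rightarrow> nat \<Rightarrow> nat \<Rightarrow> nat list set" where
  "Hc d a n = {xs. xs \<noteq> [] \<and> sorted_wrt (\<lambda>x y. y + d \<le> x) xs \<and> hd xs + length xs = Suc n \<and>
     (\<forall>x\<in>set xs. a \<le> x)}"

lemma largest_hd: "sorted_wrt (\<ge>) xs \<Longrightarrow> xs \<noteq> [] \<Longrightarrow> largest_part xs = hd xs"
  unfolding largest_part_def by (cases xs) (auto intro!: Max_eqI)

lemma F_eq: "F_set d b n - {[]} = Fc d b n"
proof -
  have "xs \<in> F_set d b n - {[]} \<longleftrightarrow> xs \<in> Fc d b n" for xs
  proof (cases "xs = []")
    case True thus ?thesis by (simp add: Fc_def)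
  next
    case False
    show ?thesis using False
      unfolding F_set_def Fc_def is_partition_def perimeter_def num_parts_def
      by (auto simp: largest_hd)
  qed
  thus ?thesis by blast
qed

lemma dd_iff: assumes "1 \<le> d" "sorted_wrt (\<ge>) xs"
  shows "d_distinct d xs \<longleftrightarrow> sorted_wrt (\<lambda>x y. y + d \<le> x) xs"
proof -
  have s: "\<And>i j. i < j \<Longrightarrow> j < length xs \<Longrightarrow> xs ! j \<le> xs ! i"
    using assms(2) by (simp add: sorted_wrt_iff_nth_less)
  show ?thesis unfolding d_distinct_def sorted_wrt_iff_nth_less
    using s assms(1) by (metis add_le_same_cancel1 le_antisym le_trans not_one_le_zero)
qed

lemma sw_mono: "sorted_wrt (\<lambda>x y. y + (d::nat) \<le> x) xs \<Longrightarrow> sorted_wrt (\<ge>) xs"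
  by (erule sorted_wrt_mono_rel[rotated]) auto

lemma H_eq: assumes "1 \<le> d" "1 \<le> a" shows "H_set d a n - {[]} = Hc d a n"
proof -
  have "xs \<in> H_set d a n - {[]} \<longleftrightarrow> xs \<in> Hc d a n" for xs
  proof (cases "xs = []")
    case True thus ?thesis by (simp add: Hc_def)
  next
    case False
    show ?thesis
    proof
      assume "xs \<in> H_set d a n - {[]}"
      thus "xs \<in> Hc d a n" using False assms
      unfolding H_set_def Hc_def is_partition_def perimeter_def num_parts_def
      by (auto simp: largest_hd dd_iff)
    next
      assume h: "xs \<in> Hc d a n"
      hence "sorted_wrt (\<ge>) xs" by (auto simp: Hc_def intro: sw_mono)
      thus "xs \<in> H_set d a n - {[]}" using h False assms
      unfolding H_set_def Hc_def is_partition_def perimeter_def num_parts_def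
      by (auto simp: largest_hd dd_iff)
    qed
  qed
  thus ?thesis by blast
qed


lemma mod_ge: fixes y b d :: nat
  assumes "0 < y" "y mod (d+1) = b mod (d+1)" "1 \<le> b" "b \<le> d+1"
  shows "b \<le> y"
proof (rule ccontr)
  assume "\<not> b \<le> y"
  hence "y < d+1" using assms by auto
  hence "y mod (d+1) = y" by simp
  show False
  proof (cases "b = d+1")
    case True thus ?thesis using assms \<open>y mod (d+1) = y\<close> by simp
  next
    case False hence "b mod (d+1) = b" using assms by simp
    thus ?thesis using assms \<open>y mod (d+1) = y\<close> \<open>\<not> b \<le> y\<close> by simp
  qed
qed

lemma mod_gt: fixes y b d :: nat
  assumes "b < y" "y mod (d+1) = b mod (d+1)"
  shows "b + (d+1) \<le> y"
proof -
  have "(d+1) dvd (y - b)" using assms by (simp add: mod_eq_dvd_iff_nat)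
  then obtain k where k: "y - b = (d+1) * k" by blast
  have "k \<noteq> 0" proof assume "k = 0" thus False using k assms by simp qed
  hence "d+1 \<le> (d+1)*k" using mult_le_mono2[of 1 k "d+1"] by simp
  thus ?thesis using k assms by linarith
qed

lemma F_decomp:
  assumes "1 \<le> n" "1 \<le> b" "b \<le> d+1"
  shows "Fc d b n = (if n = b then {[b]} else {}) \<union> (\<lambda>ys. ys @ [b]) ` Fc d b (n-1)
           \<union> map (\<lambda>y. y + (d+1)) ` Fc d b (n-(d+1))"
proof (rule set_eqI, rule iffI)
  fix xs assume xs: "xs \<in> Fc d b n"
  have "xs \<noteq> []" using xs by (simp add: Fc_def)
  then obtain ys x where xsd: "xs = ys @ [x]" by (metis rev_exhaust)
  have P: "\<forall>x\<in>set xs. 0 < x \<and> x mod (d+1) = b mod (d+1)" and S: "sorted_wrt (\<ge>) xs"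
    and L: "hd xs + length xs = Suc n" using xs by (auto simp: Fc_def)
  have ge: "\<forall>y\<in>set xs. b \<le> y" using P mod_ge assms by blast
  have xge: "\<forall>y\<in>set xs. x \<le> y" using S xsd by (auto simp: sorted_wrt_append)
  show "xs \<in> (if n = b then {[b]} else {}) \<union> (\<lambda>ys. ys @ [b]) ` Fc d b (n-1)
           \<union> map (\<lambda>y. y + (d+1)) ` Fc d b (n-(d+1))"
  proof (cases "x = b")
    case True
    show ?thesis
    proof (cases "ys = []")
      case True thus ?thesis using xsd \<open>x = b\<close> L by auto
    next
      case False
      have "ys \<in> Fc d b (n-1)" using False S P L xsd unfolding Fc_def
        by (auto simp: sorted_wrt_append)
      thus ?thesis using xsd \<open>x = b\<close> by auto
    qed
  next
    case False
    have xgt: "b < x" using False ge xsd by auto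
    have big: "\<forall>y\<in>set xs. b + (d+1) \<le> y"
    proof
      fix y assume "y \<in> set xs"
      thus "b + (d+1) \<le> y" using xgt xge P mod_gt[of b y d] by force
    qed
    define rs where "rs = map (\<lambda>y. y - (d+1)) xs"
    have eq: "xs = map (\<lambda>y. y + (d+1)) rs" unfolding rs_def using big
      by (induction xs) auto
    have ne: "xs \<noteq> []" using xsd by simp
    have h1: "hd xs \<ge> b + (d+1)" using big ne by simp
    have "rs \<in> Fc d b (n-(d+1))"
      unfolding Fc_def rs_def
    proof (intro CollectI conjI)
      show "map (\<lambda>y. y - (d + 1)) xs \<noteq> []" using ne by simp
      show "sorted_wrt (\<ge>) (map (\<lambda>y. y - (d + 1)) xs)" using S
        by (auto simp: sorted_wrt_map elim!: sorted_wrt_mono_rel[rotated])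
      show "hd (map (\<lambda>y. y - (d + 1)) xs) + length (map (\<lambda>y. y - (d + 1)) xs) = Suc (n - (d + 1))"
        using L h1 ne assms by (simp add: hd_map)
      show "\<forall>x\<in>set (map (\<lambda>y. y - (d + 1)) xs). 0 < x \<and> x mod (d + 1) = b mod (d + 1)"
      proof
        fix z assume "z \<in> set (map (\<lambda>y. y - (d + 1)) xs)"
        then obtain y where y: "y \<in> set xs" "z = y - (d+1)" by auto
        have "b + (d+1) \<le> y" using big y by auto
        moreover have "y mod (d+1) = b mod (d+1)" using P y by auto
        ultimately show "0 < z \<and> z mod (d + 1) = b mod (d + 1)" using y assms
          by (simp add: le_mod_geq)
      qed
    qed
    thus ?thesis using eq by auto
  qed
next
  fix xs assume "xs \<in> (if n = b then {[b]} else {}) \<union> (\<lambda>ys. ys @ [b]) ` Fc d b (n-1)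
           \<union> map (\<lambda>y. y + (d+1)) ` Fc d b (n-(d+1))"
  then consider "n = b" "xs = [b]" | ys where "ys \<in> Fc d b (n-1)" "xs = ys @ [b]"
    | rs where "rs \<in> Fc d b (n-(d+1))" "xs = map (\<lambda>y. y + (d+1)) rs"
    by (auto split: if_splits)
  thus "xs \<in> Fc d b n"
  proof cases
    case 1 thus ?thesis using assms by (simp add: Fc_def)
  next
    case (2 ys)
    have ge: "\<forall>y\<in>set ys. b \<le> y" using 2 mod_ge assms unfolding Fc_def by blast
    show ?thesis using 2 ge assms unfolding Fc_def by (auto simp: sorted_wrt_append)
  next
    case (3 rs)
    have ne: "rs \<noteq> []" and L: "hd rs + length rs = Suc (n - (d+1))"
      and P: "\<forall>x\<in>set rs. 0 < x \<and> x mod (d+1) = b mod (d+1)" and S: "sorted_wrt (\<ge>) rs"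
      using 3 by (auto simp: Fc_def)
    have "hd rs > 0" using ne P by simp
    moreover have "length rs > 0" using ne by simp
    ultimately have "n \<ge> d+1" using L by linarith
    hence "hd xs + length xs = Suc n" using 3 L ne by (simp add: hd_map)
    have m: "\<forall>x. Suc (x + d) mod Suc d = x mod Suc d" by (metis add_Suc_right mod_add_self2)
    thus ?thesis using 3 ne P S \<open>hd xs + length xs = Suc n\<close> by (auto simp: Fc_def sorted_wrt_map)
  qed
qed


lemma H_decomp:
  assumes "1 \<le> n" "1 \<le> a" "1 \<le> d"
  shows "Hc d a n = (if n = a then {[a]} else {}) \<union> map Suc ` Hc d a (n-1)
           \<union> (\<lambda>ys. map (\<lambda>y. y + d) ys @ [a]) ` Hc d a (n-(d+1))"
proof (rule set_eqI, rule iffI)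
  fix xs assume xs: "xs \<in> Hc d a n"
  have "xs \<noteq> []" using xs by (simp add: Hc_def)
  then obtain ys x where xsd: "xs = ys @ [x]" by (metis rev_exhaust)
  have P: "\<forall>x\<in>set xs. a \<le> x" and S: "sorted_wrt (\<lambda>x y. y + d \<le> x) xs"
    and L: "hd xs + length xs = Suc n" using xs by (auto simp: Hc_def)
  have xge: "\<forall>y\<in>set ys. x + d \<le> y" using S xsd by (auto simp: sorted_wrt_append)
  have xa: "a \<le> x" using P xsd by auto
  show "xs \<in> (if n = a then {[a]} else {}) \<union> map Suc ` Hc d a (n-1)
           \<union> (\<lambda>ys. map (\<lambda>y. y + d) ys @ [a]) ` Hc d a (n-(d+1))"
  proof (cases "x = a")
    case True
    show ?thesis
    proof (cases "ys = []")
      case True thus ?thesis using xsd \<open>x = a\<close> L by auto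
    next
      case False
      define rs where "rs = map (\<lambda>y. y - d) ys"
      have eq: "ys = map (\<lambda>y. y + d) rs" unfolding rs_def using xge
        by (induction ys) auto
      have Sy: "sorted_wrt (\<lambda>x y. y + d \<le> x) ys" using S xsd by (simp add: sorted_wrt_append)
      have h1: "hd ys \<ge> a + d" using xge False \<open>x = a\<close> by simp
      have "rs \<in> Hc d a (n-(d+1))"
        unfolding Hc_def
      proof (intro CollectI conjI)
        show "rs \<noteq> []" using False rs_def by simp
        show "sorted_wrt (\<lambda>x y. y + d \<le> x) rs" using Sy xge unfolding rs_def
          by (auto simp: sorted_wrt_map elim!: sorted_wrt_mono_rel[rotated])
        show "hd rs + length rs = Suc (n - (d + 1))"
        proof -
          have "length ys > 0" using False by simp
          thus ?thesis using L h1 False xsd assms unfolding rs_def by (simp add: hd_map)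
        qed
        show "\<forall>x\<in>set rs. a \<le> x" using xge \<open>x = a\<close> unfolding rs_def by auto
      qed
      thus ?thesis using eq xsd \<open>x = a\<close> by auto
    qed
  next
    case False
    have big: "\<forall>y\<in>set xs. a < y" using False xa xge xsd
      by auto
    define rs where "rs = map (\<lambda>y. y - 1) xs"
    have eq: "xs = map Suc rs" unfolding rs_def using big assms
      by (induction xs) auto
    have ne: "xs \<noteq> []" using xsd by simp
    have h1: "hd xs > a" using big ne by simp
    have "rs \<in> Hc d a (n-1)"
      unfolding Hc_def
    proof (intro CollectI conjI)
      show "rs \<noteq> []" using ne rs_def by simp
      show "sorted_wrt (\<lambda>x y. y + d \<le> x) rs" using S big assms unfolding rs_def
        by (auto simp: sorted_wrt_map elim!: sorted_wrt_mono_rel[rotated])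
      show "hd rs + length rs = Suc (n - 1)"
        using L h1 ne assms unfolding rs_def by (simp add: hd_map)
      show "\<forall>x\<in>set rs. a \<le> x" using big unfolding rs_def by auto
    qed
    thus ?thesis using eq by auto
  qed
next
  fix xs assume "xs \<in> (if n = a then {[a]} else {}) \<union> map Suc ` Hc d a (n-1)
           \<union> (\<lambda>ys. map (\<lambda>y. y + d) ys @ [a]) ` Hc d a (n-(d+1))"
  then consider "n = a" "xs = [a]" | ys where "ys \<in> Hc d a (n-1)" "xs = map Suc ys"
    | rs where "rs \<in> Hc d a (n-(d+1))" "xs = map (\<lambda>y. y + d) rs @ [a]"
    by (auto split: if_splits)
  thus "xs \<in> Hc d a n"
  proof cases
    case 1 thus ?thesis using assms by (simp add: Hc_def)
  next
    case (2 ys)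
    show ?thesis using 2 assms unfolding Hc_def by (auto simp: sorted_wrt_map hd_map)
  next
    case (3 rs)
    have ne: "rs \<noteq> []" and L: "hd rs + length rs = Suc (n - (d+1))"
      and P: "\<forall>x\<in>set rs. a \<le> x" and S: "sorted_wrt (\<lambda>x y. y + d \<le> x) rs"
      using 3 by (auto simp: Hc_def)
    have "hd rs > 0" using ne P assms by (metis hd_in_set le_trans not_one_le_zero neq0_conv)
    moreover have "length rs > 0" using ne by simp
    ultimately have "n \<ge> d+1" using L by linarith
    hence "hd xs + length xs = Suc n" using 3 L ne by (simp add: hd_map)
    thus ?thesis using 3 ne P S by (auto simp: Hc_def sorted_wrt_map sorted_wrt_append)
  qed
qed


lemma Fc0: "Fc d b 0 = {}"
  by (auto simp: Fc_def) (metis One_nat_def add_is_1 hd_in_set length_0_conv less_nat_zero_code)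

lemma Hc0: "1 \<le> a \<Longrightarrow> Hc d a 0 = {}"
  by (auto simp: Hc_def) (metis add_is_1 hd_in_set le_zero_eq length_0_conv not_one_le_zero)

lemma Fc_ge: "xs \<in> Fc d b n \<Longrightarrow> 1 \<le> b \<Longrightarrow> b \<le> d+1 \<Longrightarrow> xs \<noteq> [] \<and> (\<forall>y\<in>set xs. b \<le> y)"
  unfolding Fc_def using mod_ge by blast

lemma Hc_ge: "xs \<in> Hc d a n \<Longrightarrow> xs \<noteq> [] \<and> (\<forall>y\<in>set xs. a \<le> y)"
  unfolding Hc_def by blast

lemma F_disj:
  assumes "1 \<le> b" "b \<le> d+1"
  shows "(if n = b then {[b]} else {}) \<inter> (\<lambda>ys. ys @ [b]) ` Fc d b m = {}"
    "(if n = b then {[b]} else {}) \<inter> map (\<lambda>y. y + (d+1)) ` Fc d b k = {}"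
    "(\<lambda>ys. ys @ [b]) ` Fc d b m \<inter> map (\<lambda>y. y + (d+1)) ` Fc d b k = {}"
proof -
  show "(if n = b then {[b]} else {}) \<inter> (\<lambda>ys. ys @ [b]) ` Fc d b m = {}"
    using Fc_ge[OF _ assms] by auto
  show "(if n = b then {[b]} else {}) \<inter> map (\<lambda>y. y + (d+1)) ` Fc d b k = {}"
  proof (cases "n = b")
    case True
    { fix rs assume "rs \<in> Fc d b k" "[b] = map (\<lambda>y. y + (d+1)) rs"
      hence False using Fc_ge[OF _ assms, of rs k] by (cases rs) auto }
    hence "[b] \<notin> map (\<lambda>y. y + (d+1)) ` Fc d b k" by (metis imageE)
    thus ?thesis using True by simp
  qed simp
  { fix rs ys assume r: "rs \<in> Fc d b k" "ys @ [b] = map (\<lambda>y. y + (d+1)) rs"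
    hence "last (ys @ [b]) = last (map (\<lambda>y. y + (d+1)) rs)" by simp
    hence "b = last rs + (d+1)" using Fc_ge[OF r(1) assms] by (simp add: last_map)
    moreover have "last rs \<in> set rs" using Fc_ge[OF r(1) assms] by simp
    ultimately have False using Fc_ge[OF r(1) assms] by fastforce }
  thus "(\<lambda>ys. ys @ [b]) ` Fc d b m \<inter> map (\<lambda>y. y + (d+1)) ` Fc d b k = {}" by blast
qed

lemma H_disj:
  assumes "1 \<le> a"
  shows "(if n = a then {[a]} else {}) \<inter> map Suc ` Hc d a m = {}"
    "(if n = a then {[a]} else {}) \<inter> (\<lambda>ys. map (\<lambda>y. y + d) ys @ [a]) ` Hc d a k = {}"
    "map Suc ` Hc d a m \<inter> (\<lambda>ys. map (\<lambda>y. y + d) ys @ [a]) ` Hc d a k = {}"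
proof -
  show "(if n = a then {[a]} else {}) \<inter> (\<lambda>ys. map (\<lambda>y. y + d) ys @ [a]) ` Hc d a k = {}"
    using Hc_ge by auto
  show "(if n = a then {[a]} else {}) \<inter> map Suc ` Hc d a m = {}"
  proof (cases "n = a")
    case True
    { fix rs assume "rs \<in> Hc d a m" "[a] = map Suc rs"
      hence False using Hc_ge[of rs d a m] by (cases rs) auto }
    hence "[a] \<notin> map Suc ` Hc d a m" by (metis imageE)
    thus ?thesis using True by simp
  qed simp
  { fix rs ys assume r: "rs \<in> Hc d a m" "map Suc rs = map (\<lambda>y. y + d) ys @ [a]"
    hence "last (map Suc rs) = last (map (\<lambda>y. y + d) ys @ [a])" by simp
    hence "a = Suc (last rs)" using Hc_ge[OF r(1)] by (simp add: last_map)
    moreover have "last rs \<in> set rs" using Hc_ge[OF r(1)] by simp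
    ultimately have False using Hc_ge[OF r(1)] by fastforce }
  thus "map Suc ` Hc d a m \<inter> (\<lambda>ys. map (\<lambda>y. y + d) ys @ [a]) ` Hc d a k = {}" by blast
qed

lemma finite_Fc: "1 \<le> b \<Longrightarrow> b \<le> d+1 \<Longrightarrow> finite (Fc d b n)"
proof (induction n rule: less_induct)
  case (less n)
  show ?case
  proof (cases "n = 0")
    case True thus ?thesis by (simp add: Fc0)
  next
    case False
    thus ?thesis using less F_decomp[of n b d] by simp
  qed
qed

lemma finite_Hc: "1 \<le> a \<Longrightarrow> 1 \<le> d \<Longrightarrow> finite (Hc d a n)"
proof (induction n rule: less_induct)
  case (less n)
  show ?case
  proof (cases "n = 0")
    case True thus ?thesis using less by (simp add: Hc0)
  next
    case False
    thus ?thesis using less H_decomp[of n a d] by simp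
  qed
qed

lemma sum3: "finite A \<Longrightarrow> finite B \<Longrightarrow> finite C \<Longrightarrow> A \<inter> B = {} \<Longrightarrow> A \<inter> C = {} \<Longrightarrow> B \<inter> C = {}
  \<Longrightarrow> sum g (A \<union> B \<union> C) = sum g A + sum g B + sum g C"
  by (simp add: sum.union_disjoint Int_Un_distrib2)

lemma F_sums:
  assumes "1 \<le> n" "1 \<le> b" "b \<le> d+1"
  shows "card (Fc d b n) = (if n = b then 1 else 0) + card (Fc d b (n-1)) + card (Fc d b (n-(d+1)))"
    "(\<Sum>xs\<in>Fc d b n. length xs) = (if n = b then 1 else 0) + (\<Sum>xs\<in>Fc d b (n-1). length xs)
       + card (Fc d b (n-1)) + (\<Sum>xs\<in>Fc d b (n-(d+1)). length xs)"
proof -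
  let ?A = "(if n = b then {[b]} else {})"
  let ?B = "(\<lambda>ys. ys @ [b]) ` Fc d b (n-1)"
  let ?C = "map (\<lambda>y. y + (d+1)) ` Fc d b (n-(d+1))"
  have fin: "finite ?A" "finite ?B" "finite ?C" using finite_Fc assms by auto
  have i1: "inj_on (\<lambda>ys. ys @ [b]) X" for X by (auto intro: inj_onI)
  have i2: "inj_on (map (\<lambda>y. y + (d+1))) X" for X
    by (rule inj_on_subset[OF inj_mapI subset_UNIV]) (simp add: inj_def)
  have e: "sum g (Fc d b n) = sum g ?A + sum g ?B + sum g ?C" for g :: "nat list \<Rightarrow> nat"
    by (subst F_decomp[OF assms]) (rule sum3[OF fin F_disj[OF assms(2,3)]])
  show "card (Fc d b n) = (if n = b then 1 else 0) + card (Fc d b (n-1)) + card (Fc d b (n-(d+1)))"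
    using e[of "\<lambda>_. 1"] card_image[OF i2, of "Fc d b (n-(d+1))"] by (simp add: card_image[OF i1])
  show "(\<Sum>xs\<in>Fc d b n. length xs) = (if n = b then 1 else 0) + (\<Sum>xs\<in>Fc d b (n-1). length xs)
       + card (Fc d b (n-1)) + (\<Sum>xs\<in>Fc d b (n-(d+1)). length xs)"
    using e[of length] sum.reindex[OF i2, of length "Fc d b (n-(d+1))"]
    by (simp add: sum.reindex[OF i1] sum.distrib sum_Suc)
qed

lemma H_sums:
  assumes "1 \<le> n" "1 \<le> a" "1 \<le> d"
  shows "card (Hc d a n) = (if n = a then 1 else 0) + card (Hc d a (n-1)) + card (Hc d a (n-(d+1)))"
    "(\<Sum>xs\<in>Hc d a n. length xs) = (if n = a then 1 else 0) + (\<Sum>xs\<in>Hc d a (n-1). length xs)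
       + (\<Sum>xs\<in>Hc d a (n-(d+1)). length xs) + card (Hc d a (n-(d+1)))"
proof -
  let ?A = "(if n = a then {[a]} else {})"
  let ?B = "map Suc ` Hc d a (n-1)"
  let ?C = "(\<lambda>ys. map (\<lambda>y. y + d) ys @ [a]) ` Hc d a (n-(d+1))"
  have fin: "finite ?A" "finite ?B" "finite ?C" using finite_Hc assms by auto
  have i1: "inj_on (map Suc) X" for X
    by (rule inj_on_subset[OF inj_mapI subset_UNIV]) (simp add: inj_def)
  have ij: "inj (\<lambda>y::nat. y + d)" by (simp add: inj_def)
  have i2: "inj_on (\<lambda>ys. map (\<lambda>y. y + d) ys @ [a]) X" for X
    by (rule inj_onI) (simp add: inj_map_eq_map[OF ij])
  have e: "sum g (Hc d a n) = sum g ?A + sum g ?B + sum g ?C" for g :: "nat list \<Rightarrow> nat"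
    by (subst H_decomp[OF assms]) (rule sum3[OF fin H_disj[OF assms(2)]])
  show "card (Hc d a n) = (if n = a then 1 else 0) + card (Hc d a (n-1)) + card (Hc d a (n-(d+1)))"
    using e[of "\<lambda>_. 1"] by (simp add: card_image[OF i1] card_image[OF i2])
  show "(\<Sum>xs\<in>Hc d a n. length xs) = (if n = a then 1 else 0) + (\<Sum>xs\<in>Hc d a (n-1). length xs)
       + (\<Sum>xs\<in>Hc d a (n-(d+1)). length xs) + card (Hc d a (n-(d+1)))"
    using e[of length] by (simp add: sum.reindex[OF i1] sum.reindex[OF i2] sum.distrib sum_Suc)
qed


function cs :: "nat \<Rightarrow> nat \<Rightarrow> nat" where
  "cs d k = (if k = 0 then 1 else cs d (k-1) + (if Suc d \<le> k then cs d (k - Suc d) else 0))"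
  by auto
termination by (relation "measure snd") auto

declare cs.simps[simp del]

definition fc :: "nat \<Rightarrow> nat \<Rightarrow> nat \<Rightarrow> nat" where
  "fc d b k = (if b \<le> k then cs d (k-b) else 0)"

lemma fc0: "1 \<le> b \<Longrightarrow> fc d b 0 = 0" by (simp add: fc_def)

lemma fc_rec: assumes "1 \<le> k" "1 \<le> b"
  shows "fc d b k = (if k = b then 1 else 0) + fc d b (k-1) + fc d b (k-(d+1))"
proof (cases "b \<le> k")
  case False
  have "\<not> b \<le> k-1" "\<not> b \<le> k - (d+1)" using False by arith+
  thus ?thesis using assms False by (simp add: fc_def)
next
  case True
  show ?thesis
  proof (cases "k = b")
    case True
    have "\<not> b \<le> b-1" "\<not> b \<le> b - (d+1)" using assms by arith+
    thus ?thesis using assms True by (simp add: fc_def cs.simps)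
  next
    case False
    hence "k - b \<noteq> 0" using \<open>b \<le> k\<close> by simp
    hence "cs d (k-b) = cs d (k-b-1) + (if Suc d \<le> k-b then cs d (k-b - Suc d) else 0)"
      by (subst cs.simps) simp
    moreover have "(Suc d \<le> k - b) = (b \<le> k - Suc d)" using \<open>b \<le> k\<close> assms by arith
    moreover have "k - b - Suc d = k - Suc d - b" by simp
    moreover have "k - b - 1 = k - 1 - b" by simp
    moreover have "b \<le> k - 1" using False \<open>b \<le> k\<close> by arith
    ultimately show ?thesis using False True by (simp add: fc_def)
  qed
qed

lemma card_Fc: "1 \<le> b \<Longrightarrow> b \<le> d+1 \<Longrightarrow> card (Fc d b n) = fc d b n"
proof (induction n rule: less_induct)
  case (less n)
  show ?case
  proof (cases "n = 0")
    case True thus ?thesis using less by (simp add: Fc0 fc0)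
  next
    case False
    hence "1 \<le> n" by simp
    thus ?thesis using less F_sums(1)[of n b d] fc_rec[of n b d] by simp
  qed
qed

lemma card_Hc: "1 \<le> a \<Longrightarrow> 1 \<le> d \<Longrightarrow> card (Hc d a n) = fc d a n"
proof (induction n rule: less_induct)
  case (less n)
  show ?case
  proof (cases "n = 0")
    case True thus ?thesis using less by (simp add: Hc0 fc0)
  next
    case False
    hence "1 \<le> n" by simp
    thus ?thesis using less H_sums(1)[of n a d] fc_rec[of n a d] by simp
  qed
qed


definition tt :: "nat \<Rightarrow> nat \<Rightarrow> int" where
  "tt d m = int (fc d 1 m) - int (fc d (d+1) m)"

definition TT :: "nat \<Rightarrow> nat \<Rightarrow> nat \<Rightarrow> nat \<Rightarrow> int" where
  "TT d a j k = (\<Sum>m=1..k. int (fc d a (j-m)) * tt d m)"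

lemma TT_ext: assumes "1 \<le> a" "j - 1 \<le> k" shows "TT d a j k = TT d a j (j-1)"
  unfolding TT_def
proof (rule sum.mono_neutral_right)
  show "finite {1..k}" by simp
  show "{1..j-1} \<subseteq> {1..k}" using assms by auto
  show "\<forall>i\<in>{1..k} - {1..j - 1}. int (fc d a (j - i)) * tt d i = 0"
  proof
    fix i assume "i \<in> {1..k} - {1..j - 1}"
    hence "j - i = 0" by auto
    thus "int (fc d a (j - i)) * tt d i = 0" using fc0[OF assms(1)] by simp
  qed
qed

lemma delta_id: assumes "1 \<le> a" "1 \<le> n"
  shows "(\<Sum>m=1..n-1. int (if n - m = a then 1 else 0) * tt d m)
     = int (fc d a (n-1)) - int (fc d a (n-(d+1)))"
proof -
  have "(\<Sum>m=1..n-1. int (if n - m = a then 1 else 0) * tt d m)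
      = (\<Sum>m=1..n-1. if m = n - a then tt d m else 0)"
    by (rule sum.cong) (use assms in auto)
  also have "\<dots> = (if n - a \<in> {1..n-1} then tt d (n-a) else 0)"
    by (rule sum.delta) simp
  also have "\<dots> = int (fc d a (n-1)) - int (fc d a (n-(d+1)))"
  proof (cases "a < n")
    case True
    hence mem: "n - a \<in> {1..n-1}" using assms by auto
    have "1 \<le> n - a" using True by arith
    hence c1: "fc d 1 (n-a) = cs d (n-a-1)" unfolding fc_def by (simp only: if_True)
    have "a \<le> n - 1" using True by arith
    hence "fc d a (n-1) = cs d (n-1-a)" unfolding fc_def by (simp only: if_True)
    moreover have "n - 1 - a = n - a - 1" by arith
    ultimately have c2: "fc d a (n-1) = cs d (n-a-1)" by (simp only:)
    show ?thesis
    proof (cases "d+1 \<le> n - a")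
      case True
      hence "fc d (d+1) (n-a) = cs d (n-a-(d+1))" unfolding fc_def by (simp only: if_True)
      moreover have "a \<le> n-(d+1)" using True by arith
      hence "fc d a (n-(d+1)) = cs d (n-(d+1)-a)" unfolding fc_def by (simp only: if_True)
      moreover have "n-(d+1)-a = n-a-(d+1)" by arith
      ultimately show ?thesis using mem c1 c2 by (simp add: tt_def)
    next
      case False
      hence "fc d (d+1) (n-a) = 0" unfolding fc_def by (simp only: if_False)
      moreover have "\<not> a \<le> n-(d+1)" using False True assms by presburger
      hence "fc d a (n-(d+1)) = 0" unfolding fc_def by (simp only: if_False)
      ultimately show ?thesis using mem c1 c2 by (simp add: tt_def)
    qed
  next
    case False
    hence nm: "n - a \<notin> {1..n-1}" by auto
    have "\<not> a \<le> n-1" "\<not> a \<le> n-(d+1)" using False assms by arith+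
    hence z: "fc d a (n-1) = 0" "fc d a (n-(d+1)) = 0" unfolding fc_def by (simp_all only: if_False)
    show ?thesis by (simp only: nm if_False z)
  qed
  finally show ?thesis .
qed

lemma TT_rec: assumes "1 \<le> a" "1 \<le> n"
  shows "TT d a n (n-1) = TT d a (n-1) (n-1-1) + TT d a (n-(d+1)) (n-(d+1)-1)
     + int (fc d a (n-1)) - int (fc d a (n-(d+1)))"
proof -
  have "TT d a n (n-1) = (\<Sum>m=1..n-1. (int (if n - m = a then 1 else 0) + int (fc d a (n-1-m))
        + int (fc d a (n-(d+1)-m))) * tt d m)"
    unfolding TT_def
  proof (rule sum.cong)
    fix m assume "m \<in> {1..n-1}"
    hence "1 \<le> n - m" by auto
    have e1: "n-1-m = n-m-1" and e2: "n-(d+1)-m = n-m-(d+1)" by arith+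
    have "int (fc d a (n-m)) = int (if n - m = a then 1 else 0) + int (fc d a (n-1-m))
        + int (fc d a (n-(d+1)-m))" unfolding e1 e2 using fc_rec[OF \<open>1 \<le> n - m\<close> assms(1), of d]
      by (simp only: of_nat_add)
    thus "int (fc d a (n - m)) * tt d m = (int (if n - m = a then 1 else 0) + int (fc d a (n-1-m))
        + int (fc d a (n-(d+1)-m))) * tt d m" by simp
  qed simp
  also have "\<dots> = (\<Sum>m=1..n-1. int (if n - m = a then 1 else 0) * tt d m)
      + TT d a (n-1) (n-1) + TT d a (n-(d+1)) (n-1)"
    unfolding TT_def by (simp only: sum.distrib distrib_right)
  also have "TT d a (n-1) (n-1) = TT d a (n-1) (n-1-1)" by (rule TT_ext[OF assms(1)]) simp
  also have "TT d a (n-(d+1)) (n-1) = TT d a (n-(d+1)) (n-(d+1)-1)"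
    by (rule TT_ext[OF assms(1)]) simp
  finally show ?thesis using delta_id[OF assms, of d] by linarith
qed

lemma main_rec: assumes "1 \<le> a" "a \<le> d+1" "1 \<le> d"
  shows "int (\<Sum>xs\<in>Fc d a n. length xs) - int (\<Sum>xs\<in>Hc d a n. length xs) = TT d a n (n-1)"
proof (induction n rule: less_induct)
  case (less n)
  show ?case
  proof (cases "n = 0")
    case True thus ?thesis using assms by (simp add: Fc0 Hc0 TT_def)
  next
    case False
    hence n1: "1 \<le> n" by simp
    have ih1: "int (\<Sum>xs\<in>Fc d a (n-1). length xs) - int (\<Sum>xs\<in>Hc d a (n-1). length xs) = TT d a (n-1) (n-1-1)"
      using less n1 by simp
    have ih2: "int (\<Sum>xs\<in>Fc d a (n-(d+1)). length xs) - int (\<Sum>xs\<in>Hc d a (n-(d+1)). length xs) = TT d a (n-(d+1)) (n-(d+1)-1)"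
      using less n1 by simp
    have A: "int (\<Sum>xs\<in>Fc d a n. length xs) = int (if n = a then 1 else 0) + int (\<Sum>xs\<in>Fc d a (n-1). length xs)
       + int (fc d a (n-1)) + int (\<Sum>xs\<in>Fc d a (n-(d+1)). length xs)"
      using F_sums(2)[OF n1 assms(1,2)] card_Fc[OF assms(1,2), of "n-1"] by (simp only: of_nat_add)
    have B: "int (\<Sum>xs\<in>Hc d a n. length xs) = int (if n = a then 1 else 0) + int (\<Sum>xs\<in>Hc d a (n-1). length xs)
       + int (\<Sum>xs\<in>Hc d a (n-(d+1)). length xs) + int (fc d a (n-(d+1)))"
      using H_sums(2)[OF n1 assms(1,3)] card_Hc[OF assms(1,3), of "n-(d+1)"] by (simp only: of_nat_add)
    show ?thesis
      using A B ih1 ih2 TT_rec[OF assms(1) n1, of d] by linarith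
  qed
qed


lemma F_set_eq: "1 \<le> k \<Longrightarrow> F_set d b k = Fc d b k"
proof -
  assume k: "1 \<le> k"
  have "[] \<notin> F_set d b k" using k
    by (simp add: F_set_def perimeter_def largest_part_def num_parts_def)
  thus ?thesis using F_eq[of d b k] by blast
qed

lemma H_set_eq: "1 \<le> k \<Longrightarrow> 1 \<le> d \<Longrightarrow> 1 \<le> a \<Longrightarrow> H_set d a k = Hc d a k"
proof -
  assume k: "1 \<le> k" "1 \<le> d" "1 \<le> a"
  have "[] \<notin> H_set d a k" using k
    by (simp add: H_set_def perimeter_def largest_part_def num_parts_def)
  thus ?thesis using H_eq[OF k(2,3), of k] by blast
qed

lemma f_count_eq: "1 \<le> k \<Longrightarrow> 1 \<le> b \<Longrightarrow> b \<le> d+1 \<Longrightarrow> f_count d b k = fc d b k"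
  unfolding f_count_def using F_set_eq card_Fc by simp

theorem theorem1p2:
  fixes d n a :: nat
  assumes "1 \<le> d" and "1 \<le> n" and "1 \<le> a" and "a \<le> d + 1"
  shows "(\<Sum>\<pi>\<in>F_set d a n. int (num_parts \<pi>)) - (\<Sum>\<pi>\<in>H_set d a n. int (num_parts \<pi>))
       = (\<Sum>m=1..n-1. int (f_count d a (n - m)) * int (f_count d 1 m))
         - (\<Sum>m=1..n-1. int (f_count d a (n - m)) * int (f_count d (d + 1) m))"
proof -
  have L: "(\<Sum>\<pi>\<in>F_set d a n. int (num_parts \<pi>)) - (\<Sum>\<pi>\<in>H_set d a n. int (num_parts \<pi>))
     = int (\<Sum>xs\<in>Fc d a n. length xs) - int (\<Sum>xs\<in>Hc d a n. length xs)"
    using F_set_eq[OF assms(2)] H_set_eq[OF assms(2,1,3)] by (simp add: num_parts_def)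
  have R: "(\<Sum>m=1..n-1. int (f_count d a (n - m)) * int (f_count d 1 m))
         - (\<Sum>m=1..n-1. int (f_count d a (n - m)) * int (f_count d (d + 1) m)) = TT d a n (n-1)"
    unfolding TT_def tt_def sum_subtractf[symmetric] right_diff_distrib
  proof (rule sum.cong)
    fix m assume "m \<in> {1..n-1}"
    hence m: "1 \<le> m" "1 \<le> n - m" by auto
    show "int (f_count d a (n - m)) * int (f_count d 1 m) - int (f_count d a (n - m)) * int (f_count d (d + 1) m)
      = int (fc d a (n - m)) * int (fc d 1 m) - int (fc d a (n - m)) * int (fc d (d + 1) m)"
      using f_count_eq[OF m(2) assms(3,4)] f_count_eq[OF m(1), of 1 d] f_count_eq[OF m(1), of "d+1" d]
      by simp
  qed simp
  show ?thesis using L R main_rec[OF assms(3,4,1), of n] by simp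
qed

end
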